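(* Let $n\ge 4$ and let $G'_n$ be the directed graph with nodes $0,\dots,n-1$ and arcs: $i\to i+1$ for $0\le i\le n-5$; $(n-4)\to(n-3)$; $(n-4)\to(n-1)$; $(n-1)\to(n-2)$; $(n-2)\to(n-1)$; and $j\to 0$ for every $1\le j\le n-1$. For $\pi\in S_n$, the following are equivalent: (1) $\pi\in\mathcal P_n$; (2) $\pi$ is representable by $G'_n$.
   Context: $d_G(x,y)$ is the shortest directed path length from $x$ to $y$ ($\infty$ if none). The distance-count matrix $C_G\in\mathbb{R}^{n\times n}$ has $(C_G)_{i,k}=|\{j: d_G(j,i)=k\}|$. For $\mathbf a\in\mathbb{R}^{\mathbb{N}}$ (with $a_0$ arbitrary) the linear centrality is $f^{\mathbf a}_G(i)=\sum_{k=0}^{n-1}(C_G)_{i,k}a_k$. A permutation $\pi$ of $\{0,\dots,n-1\}$ is representable by $G$ if there is $\mathbf a$ with $f^{\mathbf a}_G(\pi(0))>f^{\mathbf a}_G(\pi(1))>\dots>f^{\mathbf a}_G(\pi(n-1))$. $\mathcal P_n$ is the set of permutations $\pi$ such that, with $\rho=\pi^{-1}$, one of: (1) $2\le\rho(n-1)\le n-3$; (2) $\rho(n-1)=1$ and $\rho(n-2)\ne0$; (3) $\rho(n-1)=n-2$ and $\rho(n-2)\ne n-1$. *)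

theory Defs
  imports "HOL-Combinatorics.Permutations" "HOL-Library.Extended_Nat"
begin

definition gdist :: "(nat \<times> nat) set \<Rightarrow> nat \<Rightarrow> nat \<Rightarrow> enat" where
  "gdist E x y = (if \<exists>k. (x, y) \<in> E ^^ k then enat (LEAST k. (x, y) \<in> E ^^ k) else \<infinity>)"

definition dcount :: "(nat \<times> nat) set \<Rightarrow> nat \<Rightarrow> nat \<Rightarrow> nat \<Rightarrow> nat" where
  "dcount E n i k = card {j \<in> {..<n}. gdist E j i = enat k}"

definition lincent :: "(nat \<times> nat) set \<Rightarrow> nat \<Rightarrow> (nat \<Rightarrow> real) \<Rightarrow> nat \<Rightarrow> real" where
  "lincent E n a i = (\<Sum>k<n. real (dcount E n i k) * a k)"

definition representable :: "(nat \<times> nat) set \<Rightarrow> nat \<Rightarrow> (nat \<Rightarrow> nat) \<Rightarrow> bool" where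
  "representable E n \<pi> \<longleftrightarrow>
     (\<exists>a :: nat \<Rightarrow> real. \<forall>t. Suc t < n \<longrightarrow> lincent E n a (\<pi> t) > lincent E n a (\<pi> (Suc t)))"

definition inP :: "nat \<Rightarrow> (nat \<Rightarrow> nat) \<Rightarrow> bool" where
  "inP n \<pi> \<longleftrightarrow> (let \<rho> = inv \<pi> in
      (2 \<le> \<rho> (n - 1) \<and> \<rho> (n - 1) + 3 \<le> n)
    \<or> (\<rho> (n - 1) = 1 \<and> \<rho> (n - 2) \<noteq> 0)
    \<or> (\<rho> (n - 1) = n - 2 \<and> \<rho> (n - 2) \<noteq> n - 1))"

definition Gp :: "nat \<Rightarrow> (nat \<times> nat) set" where
  "Gp n = {(i, i + 1) | i. i + 5 \<le> n}
        \<union> {(n - 4, n - 3), (n - 4, n - 1), (n - 1, n - 2), (n - 2, n - 1)}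
        \<union> {(j, 0) | j. 1 \<le> j \<and> j \<le> n - 1}"

end

theory Submission
  imports Defs
begin


definition Dd :: "nat \<Rightarrow> nat \<Rightarrow> nat \<Rightarrow> nat" where
 "Dd p j i = (if i \<le> p+1 then (if j \<le> i then i - j else i+1)
   else if i = p+2 then (if j \<le> p then p+2-j else if j = p+1 then p+3 else if j = p+2 then 0 else 1)
   else (if j \<le> p then p+1-j else if j = p+1 then p+2 else if j = p+2 then 1 else 0))"

lemma Gp_eq: "Gp (p+4) = {(i, i+1) | i. i < p} \<union> {(p, p+1), (p, p+3), (p+3, p+2), (p+2, p+3)}
   \<union> {(j,0) | j. 1 \<le> j \<and> j \<le> p+3}"
  unfolding Gp_def by (auto simp: numeral_eq_Suc)

lemma Dd_self: "j < p+4 \<Longrightarrow> Dd p j j = 0"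
  by (auto simp: Dd_def)

lemma Dd_zero: "j < p+4 \<Longrightarrow> y < p+4 \<Longrightarrow> Dd p j y = 0 \<Longrightarrow> y = j"
  by (auto simp: Dd_def split: if_splits)

lemma Dd_lt: "i < p+4 \<Longrightarrow> Dd p j i < p+4"
  by (auto simp: Dd_def)

lemma edge: assumes "(x,y) \<in> Gp (p+4)"
  shows "x < p+4 \<and> y < p+4 \<and> (\<forall>j<p+4. Dd p j y \<le> Dd p j x + 1)"
  using assms unfolding Gp_eq by (auto simp: Dd_def)

lemma Dd_low: "i \<le> p+1 \<Longrightarrow> Dd p j i = (if j \<le> i then i - j else i+1)"
  by (simp add: Dd_def)

lemma pred: assumes "j < p+4" "y < p+4" "y \<noteq> j"
  shows "\<exists>x<p+4. (x,y) \<in> Gp (p+4) \<and> Dd p j x + 1 = Dd p j y"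
proof -
  consider "y = 0" | "1 \<le> y \<and> y \<le> p+1" | "y = p+2" | "y = p+3" using assms by linarith
  then show ?thesis
  proof cases
    case 1
    then have "(j, y) \<in> Gp (p+4)" using assms unfolding Gp_eq by auto
    moreover have "Dd p j j = 0" using assms by (simp add: Dd_self)
    moreover have "Dd p j y = 1" using 1 assms by (simp add: Dd_def)
    ultimately show ?thesis using assms by auto
  next
    case 2
    have mem: "(y-1, y) \<in> Gp (p+4)"
    proof (cases "y = p+1")
      case True then show ?thesis unfolding Gp_eq by simp
    next
      case False
      then have "y - 1 < p" using 2 by arith
      then have "(y-1, y-1+1) \<in> Gp (p+4)" unfolding Gp_eq by blast
      then show ?thesis using 2 by simp
    qed
    have yl: "y - 1 \<le> p+1" using 2 by arith
    have l1: "Dd p j (y-1) = (if j \<le> y-1 then y-1-j else y)" using Dd_low[OF yl, of j] 2 by simp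
    have l2: "Dd p j y = (if j \<le> y then y-j else y+1)" using 2 by (simp add: Dd_low)
    have "Dd p j (y-1) + 1 = Dd p j y" unfolding l1 l2 using 2 assms(3) by arith
    moreover have "y - 1 < p+4" using 2 by arith
    ultimately show ?thesis using mem by (intro exI[of _ "y-1"]) simp
  next
    case 3
    have mem: "(p+3, y) \<in> Gp (p+4)" using 3 unfolding Gp_eq by simp
    have "Dd p j (p+3) + 1 = Dd p j y" using 3 assms by (simp add: Dd_def Suc_diff_le)
    then show ?thesis using mem by (intro exI[of _ "p+3"]) simp
  next
    case 4
    show ?thesis
    proof (cases "j = p+2")
      case True
      have mem: "(p+2, y) \<in> Gp (p+4)" using 4 unfolding Gp_eq by simp
      have "Dd p j (p+2) + 1 = Dd p j y" using 4 True by (simp add: Dd_def)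
      then show ?thesis using mem by (intro exI[of _ "p+2"]) simp
    next
      case False
      have mem: "(p, y) \<in> Gp (p+4)" using 4 unfolding Gp_eq by simp
      have d1: "Dd p j p = (if j \<le> p then p - j else p+1)" by (simp add: Dd_low)
      have d2: "Dd p j (p+3) = (if j \<le> p then p+1-j else if j = p+1 then p+2 else if j = p+2 then 1 else 0)"
        by (simp add: Dd_def)
      have "Dd p j p + 1 = Dd p j y" unfolding d1 4 d2 using False assms 4 by (auto simp: Suc_diff_le)
      then show ?thesis using mem by (intro exI[of _ "p"]) simp
    qed
  qed
qed

lemma pot: "(j,y) \<in> Gp (p+4) ^^ k \<Longrightarrow> j < p+4 \<Longrightarrow> y < p+4 \<and> Dd p j y \<le> k"
proof (induction k arbitrary: y)
  case 0 then show ?case by (simp add: Dd_self)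
next
  case (Suc k)
  then obtain x where "(j,x) \<in> Gp (p+4) ^^ k" "(x,y) \<in> Gp (p+4)" by auto
  with Suc.IH[of x] Suc.prems edge[of x y p] show ?case by fastforce
qed

lemma reach: "j < p+4 \<Longrightarrow> y < p+4 \<Longrightarrow> Dd p j y = m \<Longrightarrow> (j,y) \<in> Gp (p+4) ^^ m"
proof (induction m arbitrary: y)
  case 0 then show ?case using Dd_zero by auto
next
  case (Suc m)
  then have "y \<noteq> j" using Dd_self by force
  then obtain x where "x < p+4" "(x,y) \<in> Gp (p+4)" "Dd p j x + 1 = Dd p j y"
    using pred Suc.prems by blast
  with Suc show ?case by (auto intro: relpow_Suc_I)
qed

lemma gd: assumes "j < p+4" "i < p+4" shows "gdist (Gp (p+4)) j i = enat (Dd p j i)"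
proof -
  have r: "(j,i) \<in> Gp (p+4) ^^ Dd p j i" using reach assms by blast
  have "(LEAST k. (j, i) \<in> Gp (p+4) ^^ k) = Dd p j i"
    by (rule Least_equality[where P="\<lambda>k. (j, i) \<in> Gp (p+4) ^^ k", OF r]) (use pot assms in blast)
  then show ?thesis using r unfolding gdist_def by auto
qed



definition Fa :: "nat \<Rightarrow> (nat \<Rightarrow> real) \<Rightarrow> nat \<Rightarrow> real" where
  "Fa p a i = (\<Sum>j<p+4. a (Dd p j i))"

lemma lincent_Fa: assumes "i < p+4" shows "lincent (Gp (p+4)) (p+4) a i = Fa p a i"
proof -
  have "lincent (Gp (p+4)) (p+4) a i = (\<Sum>k<p+4. real (card {j \<in> {..<p+4}. Dd p j i = k}) * a k)"
    unfolding lincent_def dcount_def using gd[OF _ assms] by (intro sum.cong refl) (simp cong: conj_cong)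
  also have "\<dots> = (\<Sum>k<p+4. (\<Sum>j\<in>{j \<in> {..<p+4}. Dd p j i = k}. a (Dd p j i)))"
    by (intro sum.cong refl) simp
  also have "\<dots> = (\<Sum>j<p+4. a (Dd p j i))"
    by (rule sum.group) (use Dd_lt[OF assms] in auto)
  finally show ?thesis unfolding Fa_def .
qed

lemma Fa_lin: "Fa p (\<lambda>k. a1 k + M * a2 k) i = Fa p a1 i + M * Fa p a2 i"
  unfolding Fa_def by (simp add: sum.distrib sum_distrib_left)

lemma Fa_neg: "Fa p (\<lambda>k. - a k) i = - Fa p a i"
  unfolding Fa_def by (simp add: sum_negf)

lemma Fa_low: assumes "i \<le> p+1"
  shows "Fa p a i = (\<Sum>k<Suc i. a k) + real (p+3-i) * a (Suc i)"
proof -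
  have split: "{..<p+4} = {..<Suc i} \<union> {Suc i..<p+4}" using assms by auto
  have "Fa p a i = (\<Sum>j<Suc i. a (Dd p j i)) + (\<Sum>j\<in>{Suc i..<p+4}. a (Dd p j i))"
    unfolding Fa_def split by (rule sum.union_disjoint) auto
  also have "(\<Sum>j<Suc i. a (Dd p j i)) = (\<Sum>j<Suc i. a (Suc i - Suc j))"
    using assms by (intro sum.cong refl) (auto simp: Dd_def)
  also have "\<dots> = (\<Sum>k<Suc i. a k)" by (rule sum.nat_diff_reindex)
  also have "(\<Sum>j\<in>{Suc i..<p+4}. a (Dd p j i)) = (\<Sum>j\<in>{Suc i..<p+4}. a (Suc i))"
    using assms by (intro sum.cong refl) (auto simp: Dd_def)
  also have "\<dots> = real (p+3-i) * a (Suc i)" using assms by simp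
  finally show ?thesis .
qed

lemma Fa_step: assumes "m \<le> p"
  shows "Fa p a (Suc m) = Fa p a m + real (p+2-m) * (a (Suc (Suc m)) - a (Suc m))"
proof -
  have "real (p+3-m) = real (p+2-m) + 1" using assms by simp
  then show ?thesis using assms Fa_low[of m p a] Fa_low[of "Suc m" p a]
    by (simp add: algebra_simps)
qed

lemma Fa_0: "Fa p a 0 = a 0 + real (p+3) * a 1"
  using Fa_low[of 0 p a] by simp

lemma Fa_top: "Fa p a (p+3) = a 0 + (\<Sum>k<Suc p. a (Suc k)) + a (p+2) + a 1"
proof -
  have "Fa p a (p+3) = (\<Sum>j<Suc p. a (Dd p j (p+3))) + a (Dd p (p+1) (p+3)) + a (Dd p (p+2) (p+3)) + a (Dd p (p+3) (p+3))"
    unfolding Fa_def by (simp add: numeral_eq_Suc)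
  also have "(\<Sum>j<Suc p. a (Dd p j (p+3))) = (\<Sum>j<Suc p. (\<lambda>k. a (Suc k)) (Suc p - Suc j))"
    by (intro sum.cong refl) (auto simp: Dd_def Suc_diff_le)
  also have "\<dots> = (\<Sum>k<Suc p. a (Suc k))" by (rule sum.nat_diff_reindex)
  finally show ?thesis by (simp add: Dd_def)
qed

lemma Fa_mid: "Fa p a (p+2) = a 0 + (\<Sum>k<Suc p. a (Suc (Suc k))) + a (p+3) + a 1"
proof -
  have "Fa p a (p+2) = (\<Sum>j<Suc p. a (Dd p j (p+2))) + a (Dd p (p+1) (p+2)) + a (Dd p (p+2) (p+2)) + a (Dd p (p+3) (p+2))"
    unfolding Fa_def by (simp add: numeral_eq_Suc)
  also have "(\<Sum>j<Suc p. a (Dd p j (p+2))) = (\<Sum>j<Suc p. (\<lambda>k. a (Suc (Suc k))) (Suc p - Suc j))"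
    by (intro sum.cong refl) (auto simp: Dd_def Suc_diff_le)
  also have "\<dots> = (\<Sum>k<Suc p. a (Suc (Suc k)))" by (rule sum.nat_diff_reindex)
  finally show ?thesis by (simp add: Dd_def)
qed

lemma Fa_pm1: "Fa p a (p+1) = a 0 + (\<Sum>k<Suc p. a (Suc k)) + 2 * a (p+2)"
  using Fa_low[of "p+1" p a] by (simp add: sum.lessThan_Suc_shift del: sum.lessThan_Suc)

lemma D4: "Fa p a (p+3) - Fa p a (p+1) = a 1 - a (p+2)"
  using Fa_top[of p a] Fa_pm1[of p a] by simp

lemma D3: "Fa p a (p+2) - Fa p a (p+1) = a (p+3) - a (p+2)"
proof -
  have t: "(\<Sum>k<Suc p. a (Suc (Suc k)) - a (Suc k)) = a (Suc (Suc p)) - a 1"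
    using sum_lessThan_telescope[of "\<lambda>k. a (Suc k)" "Suc p"] by simp
  show ?thesis using Fa_mid[of p a] Fa_pm1[of p a] t
    by (simp add: sum_subtractf algebra_simps numeral_eq_Suc)
qed



lemma core: assumes "\<forall>j\<le>p+1. Fa p a j \<le> Fa p a (p+3)"
  shows "\<forall>j\<le>p+1. Fa p a j = Fa p a (p+3)"
proof -
  define u where "u j = Fa p a (p+3) - Fa p a j" for j
  define T where "T m = a (Suc m) - a 1 + u m / real (p+3-m)" for m
  have u0: "\<forall>j\<le>p+1. u j \<ge> 0" using assms by (auto simp: u_def)
  have step: "T (Suc m) = T m + u m * (1/real(p+2-m) - 1/real(p+3-m))" if m: "m \<le> p" for m
  proof -
    define d where "d = real (p+2-m)"
    define X where "X = a (Suc (Suc m)) - a (Suc m)"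
    have "u (Suc m) = u m - d * X"
      using Fa_step[OF m, of a] by (simp add: u_def d_def X_def)
    moreover have "d > 0" using m by (simp add: d_def)
    ultimately have q: "u (Suc m) / d = u m / d - X" by (simp add: diff_divide_distrib)
    have e: "p + 3 - Suc m = p+2-m" by simp
    have "T (Suc m) = a (Suc (Suc m)) - a 1 + u (Suc m) / d" unfolding T_def e d_def ..
    also have "\<dots> = a (Suc m) - a 1 + u m / d" using q by (simp add: X_def)
    finally show ?thesis unfolding T_def d_def by (simp add: algebra_simps)
  qed
  have ind: "m \<le> p+1 \<Longrightarrow> T m \<ge> 0 \<and> (\<forall>i<m. u i > 0 \<longrightarrow> T m > 0) \<and> (u 0 > 0 \<longrightarrow> T m > 0)" for m
  proof (induction m)
    case 0 then show ?case using u0 by (auto simp: T_def)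
  next
    case (Suc m)
    then have m: "m \<le> p" by simp
    have "real (p+2-m) < real (p+3-m)" "real (p+2-m) > 0" using m by auto
    then have c: "1/real(p+2-m) - 1/real(p+3-m) > 0" by (simp add: frac_less2)
    have um: "u m \<ge> 0" using u0 m by simp
    have IH: "T m \<ge> 0 \<and> (\<forall>i<m. u i > 0 \<longrightarrow> T m > 0) \<and> (u 0 > 0 \<longrightarrow> T m > 0)" using Suc by simp
    have A: "T (Suc m) \<ge> T m" using step[OF m] c um by simp
    have B: "u m > 0 \<Longrightarrow> T (Suc m) > T m" using step[OF m] c by simp
    show ?case
    proof (intro conjI allI impI)
      show "T (Suc m) \<ge> 0" using A IH by linarith
    next
      assume "u 0 > 0" then show "T (Suc m) > 0" using A IH by linarith
    next
      fix i assume "i < Suc m" "u i > 0"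
      then consider "i < m" | "i = m" by linarith
      then show "T (Suc m) > 0"
      proof cases
        case 1 then show ?thesis using IH A \<open>u i > 0\<close> by force
      next
        case 2
        then show ?thesis using B IH \<open>u i > 0\<close> by force
      qed
    qed
  qed
  have fin: "T (p+1) = - u (p+1) / 2"
    using D4[of p a] unfolding T_def u_def by (simp add: numeral_eq_Suc field_simps)
  have I: "T (p+1) \<ge> 0" "\<forall>i<p+1. u i > 0 \<longrightarrow> T (p+1) > 0" using ind[of "p+1"] by auto
  have "u (p+1) \<ge> 0" using u0 by simp
  then have "u (p+1) = 0" "T (p+1) = 0" using fin I(1) by linarith+
  have "u i = 0" if i: "i \<le> p+1" for i
  proof (cases "i = p+1")
    case True then show ?thesis using \<open>u (p+1) = 0\<close> by simp
  next
    case False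
    then have "i < p+1" using i by simp
    then have "\<not> u i > 0" using I(2) \<open>T (p+1) = 0\<close> by auto
    then show ?thesis using u0 i by force
  qed
  then have "\<forall>i\<le>p+1. u i = 0" by blast
  then show ?thesis by (simp add: u_def)
qed

lemma core_le: assumes "\<forall>j\<le>p+1. Fa p a j \<le> B" shows "Fa p a (p+3) \<le> B"
proof (rule ccontr)
  assume "\<not> ?thesis"
  then have "\<forall>j\<le>p+1. Fa p a j \<le> Fa p a (p+3)" using assms by force
  from core[OF this] have "Fa p a 0 = Fa p a (p+3)" by simp
  with assms \<open>\<not> ?thesis\<close> show False by force
qed

lemma core_lt: assumes "\<forall>j\<le>p+1. Fa p a j \<le> B" "jz \<le> p+1" "Fa p a jz < B" shows "Fa p a (p+3) < B"
proof (rule ccontr)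
  assume "\<not> ?thesis"
  then have "\<forall>j\<le>p+1. Fa p a j \<le> Fa p a (p+3)" using assms by force
  from core[OF this] have "Fa p a jz = Fa p a (p+3)" using assms by simp
  with assms \<open>\<not> ?thesis\<close> show False by force
qed

lemma core_ge: assumes "\<forall>j\<le>p+1. Fa p a j \<ge> B" shows "Fa p a (p+3) \<ge> B"
  using core_le[of p "\<lambda>k. - a k" "-B"] assms by (simp add: Fa_neg)

lemma core_gt: assumes "\<forall>j\<le>p+1. Fa p a j \<ge> B" "jz \<le> p+1" "Fa p a jz > B" shows "Fa p a (p+3) > B"
  using core_lt[of p "\<lambda>k. - a k" "-B" jz] assms by (simp add: Fa_neg)

primrec Aa :: "nat \<Rightarrow> (nat \<Rightarrow> real) \<Rightarrow> nat \<Rightarrow> real" where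
  "Aa p y 0 = 0"
| "Aa p y (Suc m) = (if m = 0 then y 0 / real (p+3) else if m \<le> p+1 then Aa p y m + (y m - y (m-1)) / real (p+3-m)
     else Aa p y m + y m - y (m-1))"

lemma Aa_ok: "i \<le> p+2 \<Longrightarrow> Fa p (Aa p y) i = y i"
proof (induction i)
  case 0 then show ?case using Fa_0[of p "Aa p y"] by simp
next
  case (Suc m)
  show ?case
  proof (cases "m \<le> p")
    case True
    have "Fa p (Aa p y) (Suc m) = y m + real (p+2-m) * (Aa p y (Suc (Suc m)) - Aa p y (Suc m))"
      using Fa_step[OF True, of "Aa p y"] Suc by simp
    also have "Aa p y (Suc (Suc m)) - Aa p y (Suc m) = (y (Suc m) - y m) / real (p+2-m)"
      using True by (simp add: numeral_eq_Suc)
    also have "real (p+2-m) > 0" using True by simp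
    ultimately show ?thesis by simp
  next
    case False
    then have m: "m = p+1" using Suc by simp
    have "Fa p (Aa p y) (p+2) = y (p+1) + (Aa p y (p+3) - Aa p y (p+2))"
      using D3[of p "Aa p y"] Suc m by simp
    also have "Aa p y (p+3) - Aa p y (p+2) = y (p+2) - y (p+1)"
      by (simp add: numeral_eq_Suc)
    finally show ?thesis using m by simp
  qed
qed



lemma two_pos:
  fixes \<pi> :: "nat \<Rightarrow> nat" and p :: nat
  assumes "\<pi> permutes {..<p+4}" "s < p+4" "t < p+4" "s \<noteq> t" "s \<noteq> inv \<pi> (p+3)" "t \<noteq> inv \<pi> (p+3)"
  shows "\<exists>j\<le>p+1. inv \<pi> j = s \<or> inv \<pi> j = t"
proof -
  have ps: "\<pi> s < p+4" "\<pi> t < p+4" using assms permutes_in_image[OF assms(1)] by auto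
  have inv: "inv \<pi> (\<pi> x) = x" for x using permutes_inverses(2)[OF assms(1)] .
  have "\<pi> s \<noteq> p+3" "\<pi> t \<noteq> p+3" using assms inv by metis+
  moreover have "\<pi> s \<noteq> \<pi> t" using assms permutes_inj[OF assms(1)] by (metis inv)
  ultimately have "\<pi> s \<le> p+1 \<or> \<pi> t \<le> p+1" using ps by linarith
  then show ?thesis using inv by metis
qed

lemma comb:
  fixes \<pi> :: "nat \<Rightarrow> nat" and p :: nat
  assumes pi: "\<pi> permutes {..<p+4}"
  defines "\<rho> \<equiv> inv \<pi>"
  shows "((2 \<le> \<rho> (p+3) \<and> \<rho> (p+3) + 3 \<le> p+4) \<or> (\<rho> (p+3) = 1 \<and> \<rho> (p+2) \<noteq> 0) \<or> (\<rho> (p+3) = p+2 \<and> \<rho> (p+2) \<noteq> p+3))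
     \<longleftrightarrow> (\<exists>j1\<le>p+1. \<rho> j1 < \<rho> (p+3)) \<and> (\<exists>j2\<le>p+1. \<rho> j2 > \<rho> (p+3))"
proof -
  have rp: "\<rho> permutes {..<p+4}" unfolding \<rho>_def using permutes_inv[OF pi] .
  have rlt: "x < p+4 \<Longrightarrow> \<rho> x < p+4" for x using permutes_in_image[OF rp] by auto
  have rinj: "\<rho> x = \<rho> y \<longleftrightarrow> x = y" for x y using permutes_inj[OF rp] by (auto dest: injD)
  have pr: "\<rho> (\<pi> x) = x" for x unfolding \<rho>_def using permutes_inverses(2)[OF pi] .
  have pgt: "x < p+4 \<Longrightarrow> \<pi> x < p+4" for x using permutes_in_image[OF pi] by auto
  show ?thesis
  proof
    assume H: "(2 \<le> \<rho> (p+3) \<and> \<rho> (p+3) + 3 \<le> p+4) \<or> (\<rho> (p+3) = 1 \<and> \<rho> (p+2) \<noteq> 0) \<or> (\<rho> (p+3) = p+2 \<and> \<rho> (p+2) \<noteq> p+3)"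
    have lo: "\<exists>j1\<le>p+1. \<rho> j1 < \<rho> (p+3)"
    proof (cases "\<rho> (p+3) \<ge> 2")
      case True
      obtain j where "j \<le> p+1" "\<rho> j = 0 \<or> \<rho> j = 1" using two_pos[OF pi, where s=0 and t=1] True unfolding \<rho>_def by force
      then show ?thesis using True by force
    next
      case False
      then have r1: "\<rho> (p+3) = 1" "\<rho> (p+2) \<noteq> 0" using H by auto
      have "\<pi> 0 \<noteq> p+3"
      proof
        assume "\<pi> 0 = p+3"
        then have "\<rho> (p+3) = 0" using pr[of 0] by simp
        then show False using r1 by simp
      qed
      moreover have "\<pi> 0 \<noteq> p+2"
      proof
        assume "\<pi> 0 = p+2"
        then have "\<rho> (p+2) = 0" using pr[of 0] by simp
        then show False using r1 by simp
      qed
      ultimately have "\<pi> 0 \<le> p+1" using pgt[of 0] by linarith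
      then show ?thesis using r1 pr[of 0] by (intro exI[of _ "\<pi> 0"]) auto
    qed
    have hi: "\<exists>j2\<le>p+1. \<rho> j2 > \<rho> (p+3)"
    proof (cases "\<rho> (p+3) + 3 \<le> p+4")
      case True
      obtain j where "j \<le> p+1" "\<rho> j = p+2 \<or> \<rho> j = p+3" using two_pos[OF pi, where s="p+2" and t="p+3"] True unfolding \<rho>_def by force
      then show ?thesis using True by force
    next
      case False
      then have r1: "\<rho> (p+3) = p+2" "\<rho> (p+2) \<noteq> p+3" using H by auto
      have "\<pi> (p+3) \<noteq> p+3"
      proof
        assume "\<pi> (p+3) = p+3"
        then have "\<rho> (p+3) = p+3" using pr[of "p+3"] by simp
        then show False using r1 by simp
      qed
      moreover have "\<pi> (p+3) \<noteq> p+2"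
      proof
        assume "\<pi> (p+3) = p+2"
        then have "\<rho> (p+2) = p+3" using pr[of "p+3"] by simp
        then show False using r1 by simp
      qed
      ultimately have "\<pi> (p+3) \<le> p+1" using pgt[of "p+3"] by linarith
      then show ?thesis using r1 pr[of "p+3"] by (intro exI[of _ "\<pi> (p+3)"]) auto
    qed
    show "(\<exists>j1\<le>p+1. \<rho> j1 < \<rho> (p+3)) \<and> (\<exists>j2\<le>p+1. \<rho> j2 > \<rho> (p+3))" using lo hi by blast
  next
    assume "(\<exists>j1\<le>p+1. \<rho> j1 < \<rho> (p+3)) \<and> (\<exists>j2\<le>p+1. \<rho> j2 > \<rho> (p+3))"
    then obtain j1 j2 where j: "j1 \<le> p+1" "\<rho> j1 < \<rho> (p+3)" "j2 \<le> p+1" "\<rho> j2 > \<rho> (p+3)" by blast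
    have r3: "\<rho> (p+3) < p+4" using rlt by simp
    have j2l: "\<rho> j2 < p+4" using rlt j by simp
    have A: "\<rho> (p+3) = 1 \<Longrightarrow> \<rho> (p+2) \<noteq> 0"
    proof
      assume "\<rho> (p+3) = 1" "\<rho> (p+2) = 0"
      then have "\<rho> j1 = \<rho> (p+2)" using j by simp
      then have "j1 = p+2" using rinj by blast
      then show False using j by simp
    qed
    have B: "\<rho> (p+3) = p+2 \<Longrightarrow> \<rho> (p+2) \<noteq> p+3"
    proof
      assume "\<rho> (p+3) = p+2" "\<rho> (p+2) = p+3"
      then have "\<rho> j2 = \<rho> (p+2)" using j j2l by simp
      then have "j2 = p+2" using rinj by blast
      then show False using j by simp
    qed
    have "\<rho> (p+3) \<ge> 1" "\<rho> (p+3) \<le> p+2" using j j2l by auto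
    then show "(2 \<le> \<rho> (p+3) \<and> \<rho> (p+3) + 3 \<le> p+4) \<or> (\<rho> (p+3) = 1 \<and> \<rho> (p+2) \<noteq> 0) \<or> (\<rho> (p+3) = p+2 \<and> \<rho> (p+2) \<noteq> p+3)"
      using A B by linarith
  qed
qed



lemma suff:
  fixes \<pi> :: "nat \<Rightarrow> nat" and p :: nat
  assumes pi: "\<pi> permutes {..<p+4}"
    and j: "j1 \<le> p+1" "inv \<pi> j1 < inv \<pi> (p+3)" "j2 \<le> p+1" "inv \<pi> j2 > inv \<pi> (p+3)"
  shows "\<exists>a. \<forall>v<p+4. \<forall>w<p+4. inv \<pi> v < inv \<pi> w \<longrightarrow> Fa p a v > Fa p a w"
proof -
  define \<rho> where "\<rho> = inv \<pi>"
  have rp: "\<rho> permutes {..<p+4}" unfolding \<rho>_def using permutes_inv[OF pi] .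
  have rlt: "x < p+4 \<Longrightarrow> \<rho> x < p+4" for x using permutes_in_image[OF rp] by auto
  define rr where "rr v = - real (\<rho> v)" for v
  define ind :: "nat \<Rightarrow> real" where "ind v = (if \<rho> v < \<rho> (p+3) then 1 else 0)" for v
  define c1 where "c1 = Fa p (Aa p rr) (p+3)"
  define c2 where "c2 = Fa p (Aa p ind) (p+3)"
  have okr: "j \<le> p+2 \<Longrightarrow> Fa p (Aa p rr) j = rr j" for j by (rule Aa_ok)
  have oki: "j \<le> p+2 \<Longrightarrow> Fa p (Aa p ind) j = ind j" for j by (rule Aa_ok)
  have c1le: "c1 \<le> 0" unfolding c1_def by (rule core_le) (simp add: okr rr_def)
  have c1g: "\<forall>j\<le>p+1. Fa p (Aa p rr) j \<ge> - real (p+4)"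
  proof (intro allI impI)
    fix j :: nat assume jj: "j \<le> p+1"
    then have "\<rho> j < p+4" using rlt by simp
    then show "Fa p (Aa p rr) j \<ge> - real (p+4)" using jj by (simp add: okr rr_def)
  qed
  have c1ge: "c1 \<ge> - real (p+4)" unfolding c1_def by (rule core_ge[OF c1g])
  have ind1: "\<forall>j\<le>p+1. Fa p (Aa p ind) j \<le> 1" by (auto simp: oki ind_def)
  have ind2: "Fa p (Aa p ind) j2 < 1" using j by (simp add: oki ind_def \<rho>_def)
  have c2lt: "c2 < 1" unfolding c2_def using core_lt[OF ind1 j(3) ind2] .
  have ind3: "\<forall>j\<le>p+1. Fa p (Aa p ind) j \<ge> 0" by (auto simp: oki ind_def)
  have ind4: "Fa p (Aa p ind) j1 > 0" using j by (simp add: oki ind_def \<rho>_def)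
  have c2gt: "c2 > 0" unfolding c2_def using core_gt[OF ind3 j(1) ind4] .
  define N where "N = real (p+4)"
  define M where "M = N / c2 + N / (1 - c2) + 1"
  have Npos: "N > 0" by (simp add: N_def)
  have M1: "M * c2 > N"
  proof -
    have "M * c2 = N + (N / (1 - c2) + 1) * c2" using c2gt by (simp add: M_def field_simps)
    moreover have "(N / (1 - c2) + 1) * c2 > 0" using c2gt c2lt Npos by (intro mult_pos_pos add_pos_pos divide_pos_pos) auto
    ultimately show ?thesis by simp
  qed
  have M2: "M * (1 - c2) > N"
  proof -
    have "M * (1 - c2) = N + (N / c2 + 1) * (1 - c2)" using c2gt c2lt by (simp add: M_def field_simps)
    moreover have "(N / c2 + 1) * (1 - c2) > 0" using c2gt c2lt Npos by (intro mult_pos_pos add_pos_pos divide_pos_pos) auto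
    ultimately show ?thesis by simp
  qed
  have Mpos: "M > 0" unfolding M_def using c2gt c2lt Npos by (intro add_pos_pos divide_pos_pos) auto
  define a where "a k = Aa p rr k + M * Aa p ind k" for k
  have Fa_a: "Fa p a i = Fa p (Aa p rr) i + M * Fa p (Aa p ind) i" for i
    unfolding a_def by (rule Fa_lin)
  have Flow: "v \<le> p+2 \<Longrightarrow> Fa p a v = rr v + M * ind v" for v using Fa_a okr oki by simp
  have Ftop: "Fa p a (p+3) = c1 + M * c2" using Fa_a c1_def c2_def by simp
  have rrb: "v < p+4 \<Longrightarrow> rr v \<ge> - N \<and> rr v \<le> 0" for v using rlt[of v] by (simp add: rr_def N_def)
  show ?thesis
  proof (intro exI allI impI)
    fix v w assume v: "v < p+4" and w: "w < p+4" and vw: "inv \<pi> v < inv \<pi> w"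
    then have vw': "\<rho> v < \<rho> w" by (simp add: \<rho>_def)
    show "Fa p a v > Fa p a w"
    proof (cases "v = p+3")
      case True
      have "w \<noteq> p+3" using vw' True by auto
      then have "w \<le> p+2" using w by simp
      then have "Fa p a w = rr w" "ind w = 0" using Flow True vw' by (auto simp: ind_def)
      then show ?thesis using True Ftop rrb[OF w] c1ge M1 by (simp add: N_def)
    next
      case False
      then have vl: "v \<le> p+2" using v by simp
      show ?thesis
      proof (cases "w = p+3")
        case True
        then have "ind v = 1" using vw' by (simp add: ind_def)
        then show ?thesis using True Ftop Flow[OF vl] rrb[OF v] c1le M2 by (simp add: algebra_simps)
      next
        case False
        then have wl: "w \<le> p+2" using w by simp
        have "ind v \<ge> ind w" using vw' by (simp add: ind_def)
        then have "M * ind v \<ge> M * ind w" using Mpos by simp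
        moreover have "rr v > rr w" using vw' by (simp add: rr_def)
        ultimately show ?thesis using Flow[OF vl] Flow[OF wl] by simp
      qed
    qed
  qed
qed

lemma necc:
  fixes \<pi> :: "nat \<Rightarrow> nat" and p :: nat
  assumes pi: "\<pi> permutes {..<p+4}"
    and ord: "\<forall>v<p+4. \<forall>w<p+4. inv \<pi> v < inv \<pi> w \<longrightarrow> Fa p a v > Fa p a w"
  shows "(\<exists>j1\<le>p+1. inv \<pi> j1 < inv \<pi> (p+3)) \<and> (\<exists>j2\<le>p+1. inv \<pi> j2 > inv \<pi> (p+3))"
proof -
  define \<rho> where "\<rho> = inv \<pi>"
  have rp: "\<rho> permutes {..<p+4}" unfolding \<rho>_def using permutes_inv[OF pi] .
  have rinj: "\<rho> x = \<rho> y \<longleftrightarrow> x = y" for x y using permutes_inj[OF rp] by (auto dest: injD)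
  have A: "\<exists>j1\<le>p+1. \<rho> j1 < \<rho> (p+3)"
  proof (rule ccontr)
    assume na: "\<not> (\<exists>j1\<le>p+1. \<rho> j1 < \<rho> (p+3))"
    have "\<forall>j\<le>p+1. \<rho> j > \<rho> (p+3)"
    proof (intro allI impI)
      fix j assume "j \<le> p+1"
      then have "\<rho> j \<noteq> \<rho> (p+3)" "\<not> \<rho> j < \<rho> (p+3)" using rinj na by auto
      then show "\<rho> j > \<rho> (p+3)" by simp
    qed
    then have "\<forall>j\<le>p+1. Fa p a j < Fa p a (p+3)"
    proof (intro allI impI)
      fix j assume "\<forall>j\<le>p+1. \<rho> j > \<rho> (p+3)" "j \<le> p+1"
      then have "inv \<pi> (p+3) < inv \<pi> j" "j < p+4" by (auto simp: \<rho>_def)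
      then show "Fa p a j < Fa p a (p+3)" using ord by simp
    qed
    then have h: "\<forall>j\<le>p+1. Fa p a j \<le> Fa p a (p+3)" "Fa p a 0 < Fa p a (p+3)" by (auto simp: less_imp_le)
    have "Fa p a (p+3) < Fa p a (p+3)" by (rule core_lt[OF h(1) _ h(2)]) simp
    then show False by simp
  qed
  have B: "\<exists>j2\<le>p+1. \<rho> j2 > \<rho> (p+3)"
  proof (rule ccontr)
    assume na: "\<not> (\<exists>j2\<le>p+1. \<rho> j2 > \<rho> (p+3))"
    have "\<forall>j\<le>p+1. \<rho> j < \<rho> (p+3)"
    proof (intro allI impI)
      fix j assume "j \<le> p+1"
      then have "\<rho> j \<noteq> \<rho> (p+3)" "\<not> \<rho> j > \<rho> (p+3)" using rinj na by auto
      then show "\<rho> j < \<rho> (p+3)" by simp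
    qed
    then have "\<forall>j\<le>p+1. Fa p a j > Fa p a (p+3)"
    proof (intro allI impI)
      fix j assume "\<forall>j\<le>p+1. \<rho> j < \<rho> (p+3)" "j \<le> p+1"
      then have "inv \<pi> j < inv \<pi> (p+3)" "j < p+4" by (auto simp: \<rho>_def)
      then show "Fa p a j > Fa p a (p+3)" using ord by simp
    qed
    then have h: "\<forall>j\<le>p+1. Fa p a j \<ge> Fa p a (p+3)" "Fa p a 0 > Fa p a (p+3)" by (auto simp: less_imp_le)
    have "Fa p a (p+3) > Fa p a (p+3)" by (rule core_gt[OF h(1) _ h(2)]) simp
    then show False by simp
  qed
  show ?thesis using A B by (simp add: \<rho>_def)
qed

theorem theorem8:
  fixes n :: nat and \<pi> :: "nat \<Rightarrow> nat"
  assumes "n \<ge> 4" and "\<pi> permutes {..<n}"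
  shows "inP n \<pi> \<longleftrightarrow> representable (Gp n) n \<pi>"
proof -
  obtain p where n: "n = p+4" using assms(1) by (metis add.commute le_Suc_ex)
  have pi: "\<pi> permutes {..<p+4}" using assms(2) n by simp
  have pr: "inv \<pi> (\<pi> x) = x" for x using permutes_inverses(2)[OF pi] .
  have rp: "\<pi> (inv \<pi> x) = x" for x using permutes_inverses(1)[OF pi] .
  have rlt: "x < p+4 \<Longrightarrow> inv \<pi> x < p+4" for x using permutes_in_image[OF permutes_inv[OF pi]] by auto
  have plt: "x < p+4 \<Longrightarrow> \<pi> x < p+4" for x using permutes_in_image[OF pi] by auto
  have L: "lincent (Gp (p+4)) (p+4) a i = Fa p a i" if "i < p+4" for a i using lincent_Fa[OF that] .
  have R: "representable (Gp n) n \<pi> \<longleftrightarrow> (\<exists>a. \<forall>v<p+4. \<forall>w<p+4. inv \<pi> v < inv \<pi> w \<longrightarrow> Fa p a v > Fa p a w)"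
  proof
    assume "representable (Gp n) n \<pi>"
    then obtain a where a: "\<forall>t. Suc t < p+4 \<longrightarrow> Fa p a (\<pi> t) > Fa p a (\<pi> (Suc t))"
      unfolding representable_def n using L plt by (metis Suc_lessD)
    have chain: "s < t \<Longrightarrow> t < p+4 \<Longrightarrow> Fa p a (\<pi> s) > Fa p a (\<pi> t)" for s t
    proof (induction t)
      case 0 then show ?case by simp
    next
      case (Suc t)
      then have "Fa p a (\<pi> t) > Fa p a (\<pi> (Suc t))" using a by simp
      moreover have "s < t \<Longrightarrow> Fa p a (\<pi> s) > Fa p a (\<pi> t)" using Suc by simp
      ultimately show ?case using Suc.prems by (cases "s = t") auto
    qed
    show "\<exists>a. \<forall>v<p+4. \<forall>w<p+4. inv \<pi> v < inv \<pi> w \<longrightarrow> Fa p a v > Fa p a w"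
      using chain[of "inv \<pi> _" "inv \<pi> _"] rp rlt by metis
  next
    assume "\<exists>a. \<forall>v<p+4. \<forall>w<p+4. inv \<pi> v < inv \<pi> w \<longrightarrow> Fa p a v > Fa p a w"
    then obtain a where a: "\<forall>v<p+4. \<forall>w<p+4. inv \<pi> v < inv \<pi> w \<longrightarrow> Fa p a v > Fa p a w" by blast
    have "lincent (Gp n) n a (\<pi> t) > lincent (Gp n) n a (\<pi> (Suc t))" if "Suc t < n" for t
    proof -
      have "t < p+4" "Suc t < p+4" using that n by auto
      then show ?thesis using a[rule_format, of "\<pi> t" "\<pi> (Suc t)"] plt pr L n by simp
    qed
    then show "representable (Gp n) n \<pi>" unfolding representable_def by blast
  qed
  have I: "inP n \<pi> \<longleftrightarrow> (\<exists>j1\<le>p+1. inv \<pi> j1 < inv \<pi> (p+3)) \<and> (\<exists>j2\<le>p+1. inv \<pi> j2 > inv \<pi> (p+3))"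
    using comb[OF pi] unfolding inP_def n Let_def by (simp add: numeral_eq_Suc)
  show ?thesis unfolding I R using suff[OF pi] necc[OF pi] by blast
qed


end
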